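(* Let $\mathcal X,\mathcal U$ be finite nonempty sets, $f:\mathcal X\times\mathcal U\to\mathcal X$ and $\ell,g:\mathcal X\to\mathbb R$, and let $$v_{\mathrm{RAA}}^*(x)=\max_{\mathbf u\in\mathbb U}\min\Big\{\max_{\tau\in\mathbb N}\ell(\xi_x^{\mathbf u}(\tau)),\min_{\kappa\in\mathbb N}g(\xi_x^{\mathbf u}(\kappa))\Big\}.$$ Then there is an augmented policy $\bar\pi\in\overline\Pi$ such that for all $x\in\mathcal X$, $$v_{\mathrm{RAA}}^*(x)=\min\Big\{\max_{\tau\in\mathbb N}\ell(\bar\xi_x^{\bar\pi}(\tau)),\min_{\tau\in\mathbb N}g(\bar\xi_x^{\bar\pi}(\tau))\Big\}.$$
   Context: $\mathbb N=\{0,1,\dots\}$; $\mathbb U$ is the set of sequences $\mathbb N\to\mathcal U$; for $\mathbf u\in\mathbb U$: $\xi_x^{\mathbf u}(0)=x$, $\xi_x^{\mathbf u}(t+1)=f(\xi_x^{\mathbf u}(t),\mathbf u(t))$. Let $\mathcal Y=\{\ell(x):x\in\mathcal X\}$, $\mathcal Z=\{g(x):x\in\mathcal X\}$ and $\overline\Pi$ the set of maps $\bar\pi:\mathcal X\times\mathcal Y\times\mathcal Z\to\mathcal U$. For $\bar\pi\in\overline\Pi$, define $\bar\xi_x^{\bar\pi}(0)=x$, $\bar y_x^{\bar\pi}(0)=\ell(x)$, $\bar z_x^{\bar\pi}(0)=g(x)$, $\bar\xi_x^{\bar\pi}(t+1)=f\big(\bar\xi_x^{\bar\pi}(t),\bar\pi(\bar\xi_x^{\bar\pi}(t),\bar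 y_x^{\bar\pi}(t),\bar z_x^{\bar\pi}(t))\big)$, $\bar y_x^{\bar\pi}(t+1)=\max\{\ell(\bar\xi_x^{\bar\pi}(t+1)),\bar y_x^{\bar\pi}(t)\}$, $\bar z_x^{\bar\pi}(t+1)=\min\{g(\bar\xi_x^{\bar\pi}(t+1)),\bar z_x^{\bar\pi}(t)\}$. *)

theory Defs
  imports "HOL-Analysis.Analysis"
begin

primrec traj :: "('x \<Rightarrow> 'u \<Rightarrow> 'x) \<Rightarrow> 'x \<Rightarrow> (nat \<Rightarrow> 'u) \<Rightarrow> nat \<Rightarrow> 'x" where
  "traj f x u 0 = x"
| "traj f x u (Suc t) = f (traj f x u t) (u t)"

text \<open>Reach-avoid value along a sequence of states: min{ max_tau l, min_kappa g }.
  Suprema/infima are over finitely many values (finite state space) hence attained.\<close>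
definition raa_payoff :: "('x \<Rightarrow> real) \<Rightarrow> ('x \<Rightarrow> real) \<Rightarrow> (nat \<Rightarrow> 'x) \<Rightarrow> real" where
  "raa_payoff l g s = min (SUP tau. l (s tau)) (INF kappa. g (s kappa))"

definition v_RAA :: "('x \<Rightarrow> 'u \<Rightarrow> 'x) \<Rightarrow> ('x \<Rightarrow> real) \<Rightarrow> ('x \<Rightarrow> real) \<Rightarrow> 'x \<Rightarrow> real" where
  "v_RAA f l g x = (SUP u :: nat \<Rightarrow> 'u. raa_payoff l g (traj f x u))"

primrec aug_traj :: "('x \<Rightarrow> 'u \<Rightarrow> 'x) \<Rightarrow> ('x \<Rightarrow> real) \<Rightarrow> ('x \<Rightarrow> real)
    \<Rightarrow> ('x \<Rightarrow> real \<Rightarrow> real \<Rightarrow> 'u) \<Rightarrow> 'x \<Rightarrow> nat \<Rightarrow> 'x \<times> real \<times> real" where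
  "aug_traj f l g pol x 0 = (x, l x, g x)"
| "aug_traj f l g pol x (Suc t) =
     (let (xt, yt, zt) = aug_traj f l g pol x t;
          xn = f xt (pol xt yt zt)
      in (xn, max (l xn) yt, min (g xn) zt))"

definition aug_state :: "('x \<Rightarrow> 'u \<Rightarrow> 'x) \<Rightarrow> ('x \<Rightarrow> real) \<Rightarrow> ('x \<Rightarrow> real)
    \<Rightarrow> ('x \<Rightarrow> real \<Rightarrow> real \<Rightarrow> 'u) \<Rightarrow> 'x \<Rightarrow> nat \<Rightarrow> 'x" where
  "aug_state f l g pol x t = fst (aug_traj f l g pol x t)"

end

theory Submission
  imports Defs
begin

lemma fin_SUP_attain:
  fixes F :: "'a \<Rightarrow> real"
  assumes "finite (range F)"
  shows "\<exists>a. (SUP a. F a) = F a"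
proof -
  have "Sup (range F) = Max (range F)" using assms by (simp add: cSup_eq_Max)
  moreover have "Max (range F) \<in> range F" using assms by (intro Max_in) auto
  ultimately show ?thesis by auto
qed

lemma fin_INF_attain:
  fixes F :: "'a \<Rightarrow> real"
  assumes "finite (range F)"
  shows "\<exists>a. (INF a. F a) = F a"
proof -
  have "Inf (range F) = Min (range F)" using assms by (simp add: cInf_eq_Min)
  moreover have "Min (range F) \<in> range F" using assms by (intro Min_in) auto
  ultimately show ?thesis by auto
qed

lemma fin_SUP_upper:
  fixes F :: "'a \<Rightarrow> real"
  assumes "finite (range F)"
  shows "F a \<le> (SUP a. F a)"
  using assms by (intro cSUP_upper) (auto intro: bdd_above_finite)

lemma fin_INF_lower:
  fixes F :: "'a \<Rightarrow> real"
  assumes "finite (range F)"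
  shows "(INF a. F a) \<le> F a"
  using assms by (intro cINF_lower) (auto intro: bdd_below_finite)

lemma SUP_split:
  fixes h :: "nat \<Rightarrow> real"
  assumes "finite (range h)"
  shows "(SUP t. h t) = max (h 0) (SUP t. h (Suc t))"
proof -
  have e: "range h = insert (h 0) (range (\<lambda>t. h (Suc t)))"
    by (auto simp: image_iff) (metis not0_implies_Suc)
  have "finite (range (\<lambda>t. h (Suc t)))"
    by (rule finite_subset[OF _ assms]) auto
  then show ?thesis unfolding e by (simp add: Sup_insert_finite)
qed

lemma INF_split:
  fixes h :: "nat \<Rightarrow> real"
  assumes "finite (range h)"
  shows "(INF t. h t) = min (h 0) (INF t. h (Suc t))"
proof -
  have e: "range h = insert (h 0) (range (\<lambda>t. h (Suc t)))"
    by (auto simp: image_iff) (metis not0_implies_Suc)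
  have "finite (range (\<lambda>t. h (Suc t)))"
    by (rule finite_subset[OF _ assms]) auto
  then show ?thesis unfolding e by (simp add: Inf_insert_finite)
qed

lemma traj_shift:
  "traj f x u (Suc t) = traj f (f x (u 0)) (\<lambda>t. u (Suc t)) t"
  by (induction t) auto

context
  fixes f :: "'x::finite \<Rightarrow> 'u::finite \<Rightarrow> 'x"
    and l g :: "'x \<Rightarrow> real"
begin

definition J :: "'x \<Rightarrow> real \<Rightarrow> real \<Rightarrow> (nat \<Rightarrow> 'u) \<Rightarrow> real" where
  "J x y z u = min (max y (SUP t. l (traj f x u (Suc t)))) (min z (INF t. g (traj f x u (Suc t))))"

definition V :: "'x \<Rightarrow> real \<Rightarrow> real \<Rightarrow> real" where
  "V x y z = (SUP u. J x y z u)"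

definition R :: "real \<Rightarrow> 'x \<Rightarrow> real \<Rightarrow> (nat \<Rightarrow> 'u) \<Rightarrow> nat \<Rightarrow> bool" where
  "R c x y u n = (c \<le> y \<or> (\<exists>t<n. c \<le> l (traj f x u (Suc t))))"

definition N :: "'x \<Rightarrow> real \<Rightarrow> real \<Rightarrow> nat" where
  "N x y z = (LEAST n. \<exists>u. J x y z u = V x y z \<and> R (V x y z) x y u n)"

definition P :: "'x \<Rightarrow> real \<Rightarrow> real \<Rightarrow> 'u" where
  "P x y z = (SOME u. J x y z u = V x y z \<and> R (V x y z) x y u (N x y z)) 0"

lemma finl: "finite (range (\<lambda>t. l (h t)))"
  by (rule finite_subset[of _ "range l"]) auto

lemma fing: "finite (range (\<lambda>t. g (h t)))"
  by (rule finite_subset[of _ "range g"]) auto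

lemma J_in: "J x y z u \<in> insert y (insert z (range l \<union> range g))"
proof -
  obtain a where a: "(SUP t. l (traj f x u (Suc t))) = l (traj f x u (Suc a))"
    using fin_SUP_attain[OF finl[of "\<lambda>t. traj f x u (Suc t)"]] by blast
  obtain b where b: "(INF t. g (traj f x u (Suc t))) = g (traj f x u (Suc b))"
    using fin_INF_attain[OF fing[of "\<lambda>t. traj f x u (Suc t)"]] by blast
  show ?thesis unfolding J_def a b by (auto simp: min_def max_def)
qed

lemma finJ: "finite (range (J x y z))"
proof (rule finite_subset)
  show "range (J x y z) \<subseteq> insert y (insert z (range l \<union> range g))" by (rule image_subsetI, rule J_in)
qed auto

lemma V_attain: "\<exists>u. J x y z u = V x y z"
  using fin_SUP_attain[OF finJ] unfolding V_def by metis

lemma J_le_V: "J x y z u \<le> V x y z"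
  unfolding V_def by (rule fin_SUP_upper[OF finJ])

lemma V_le_z: "V x y z \<le> z"
  using V_attain[of x y z] unfolding J_def by (metis min.bounded_iff min.cobounded1 order.refl)

lemma J_shift:
  "J x y z u = J (f x (u 0)) (max (l (f x (u 0))) y) (min (g (f x (u 0))) z) (\<lambda>t. u (Suc t))"
proof -
  let ?x1 = "f x (u 0)" and ?u = "\<lambda>t. u (Suc t)"
  have e: "(\<lambda>t. traj f x u (Suc t)) = traj f ?x1 ?u" by (rule ext, rule traj_shift)
  have s: "(SUP t. l (traj f x u (Suc t))) = max (l ?x1) (SUP t. l (traj f ?x1 ?u (Suc t)))"
    using SUP_split[OF finl[of "traj f ?x1 ?u"]] e by (metis traj.simps(1))
  have i: "(INF t. g (traj f x u (Suc t))) = min (g ?x1) (INF t. g (traj f ?x1 ?u (Suc t)))"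
    using INF_split[OF fing[of "traj f ?x1 ?u"]] e by (metis traj.simps(1))
  show ?thesis unfolding J_def s i
    by (simp add: max.assoc min.assoc max.commute max.left_commute min.commute min.left_commute)
qed

lemma N_ex: "\<exists>n u. J x y z u = V x y z \<and> R (V x y z) x y u n"
proof -
  obtain u where u: "J x y z u = V x y z" using V_attain by blast
  show ?thesis
  proof (cases "V x y z \<le> y")
    case True then show ?thesis using u unfolding R_def by blast
  next
    case False
    obtain a where a: "(SUP t. l (traj f x u (Suc t))) = l (traj f x u (Suc a))"
      using fin_SUP_attain[OF finl[of "\<lambda>t. traj f x u (Suc t)"]] by blast
    have "V x y z \<le> max y (SUP t. l (traj f x u (Suc t)))"
      using u unfolding J_def by (metis min.cobounded1)
    then have "V x y z \<le> l (traj f x u (Suc a))" using False a by auto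
    then show ?thesis using u unfolding R_def by (intro exI[of _ "Suc a"] exI[of _ u]) auto
  qed
qed

lemma step:
  fixes x y z
  defines "x1 \<equiv> f x (P x y z)"
  shows "V x1 (max (l x1) y) (min (g x1) z) = V x y z"
    and "N x1 (max (l x1) y) (min (g x1) z) \<le> N x y z - 1"
proof -
  define u where "u = (SOME u. J x y z u = V x y z \<and> R (V x y z) x y u (N x y z))"
  have ex: "\<exists>u. J x y z u = V x y z \<and> R (V x y z) x y u (N x y z)"
    unfolding N_def by (rule LeastI_ex) (rule N_ex)
  have u: "J x y z u = V x y z" "R (V x y z) x y u (N x y z)"
    using someI_ex[OF ex] unfolding u_def by auto
  have a: "P x y z = u 0" unfolding P_def u_def by simp
  let ?u = "\<lambda>t. u (Suc t)"
  let ?y1 = "max (l x1) y" and ?z1 = "min (g x1) z"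
  have Ju: "J x1 ?y1 ?z1 ?u = V x y z"
    using u(1) J_shift[of x y z u] unfolding x1_def a by simp
  have le: "V x1 ?y1 ?z1 \<le> V x y z"
    unfolding V_def[of x1]
  proof (rule cSUP_least)
    fix v
    have "J x1 ?y1 ?z1 v = J x y z (case_nat (u 0) v)"
      using J_shift[of x y z "case_nat (u 0) v"] unfolding x1_def a by simp
    also have "\<dots> \<le> V x y z" by (rule J_le_V)
    finally show "J x1 ?y1 ?z1 v \<le> V x y z" .
  qed simp
  moreover have "V x y z \<le> V x1 ?y1 ?z1" using Ju J_le_V by metis
  ultimately show V1: "V x1 ?y1 ?z1 = V x y z" by simp
  have "R (V x y z) x1 ?y1 ?u (N x y z - 1)"
  proof (cases "V x y z \<le> y")
    case True then show ?thesis by (auto simp: R_def)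
  next
    case False
    then obtain t where t: "t < N x y z" "V x y z \<le> l (traj f x u (Suc t))"
      using u(2) unfolding R_def by blast
    show ?thesis
    proof (cases t)
      case 0
      then have "V x y z \<le> l x1" using t unfolding x1_def a by simp
      then show ?thesis unfolding R_def by (intro disjI1) simp
    next
      case (Suc t')
      have "l (traj f x u (Suc t)) = l (traj f x1 ?u (Suc t'))"
        unfolding Suc x1_def a by (rule arg_cong[where f=l], rule traj_shift)
      moreover have "t' < N x y z - 1" using t(1) Suc by simp
      ultimately show ?thesis using t(2) unfolding R_def by auto
    qed
  qed
  then show "N x1 ?y1 ?z1 \<le> N x y z - 1"
    unfolding N_def[of x1] V1 by (intro Least_le exI[of _ ?u]) (use Ju V1 in auto)
qed

end

theorem mainTheorem9:
  fixes f :: "'x::finite \<Rightarrow> 'u::finite \<Rightarrow> 'x"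
    and l g :: "'x \<Rightarrow> real"
  shows "\<exists>pol :: 'x \<Rightarrow> real \<Rightarrow> real \<Rightarrow> 'u. \<forall>x.
           v_RAA f l g x
             = min (SUP tau. l (aug_state f l g pol x tau)) (INF tau. g (aug_state f l g pol x tau))"
proof (rule exI[of _ "P f l g"], rule allI)
  fix x
  let ?pol = "P f l g"
  define st where "st = aug_traj f l g ?pol x"
  define xs where "xs k = fst (st k)" for k
  define ys where "ys k = fst (snd (st k))" for k
  define zs where "zs k = snd (snd (st k))" for k
  have st: "st k = (xs k, ys k, zs k)" for k unfolding xs_def ys_def zs_def by simp
  have st0: "xs 0 = x" "ys 0 = l x" "zs 0 = g x" unfolding xs_def ys_def zs_def st_def by auto
  have stS: "xs (Suc k) = f (xs k) (?pol (xs k) (ys k) (zs k))"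
    "ys (Suc k) = max (l (xs (Suc k))) (ys k)" "zs (Suc k) = min (g (xs (Suc k))) (zs k)" for k
  proof -
    have "st (Suc k) = (f (xs k) (?pol (xs k) (ys k) (zs k)),
       max (l (f (xs k) (?pol (xs k) (ys k) (zs k)))) (ys k),
       min (g (f (xs k) (?pol (xs k) (ys k) (zs k)))) (zs k))"
      using st[of k] unfolding st_def by (simp add: Let_def)
    then show "xs (Suc k) = f (xs k) (?pol (xs k) (ys k) (zs k))"
      "ys (Suc k) = max (l (xs (Suc k))) (ys k)" "zs (Suc k) = min (g (xs (Suc k))) (zs k)"
      using st[of "Suc k"] by auto
  qed
  define c where "c = V f l g x (l x) (g x)"
  have inv: "V f l g (xs k) (ys k) (zs k) = c \<and> N f l g (xs k) (ys k) (zs k) \<le> N f l g x (l x) (g x) - k" for k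
  proof (induction k)
    case 0 then show ?case using st0 c_def by simp
  next
    case (Suc k)
    have "V f l g (xs (Suc k)) (ys (Suc k)) (zs (Suc k)) = V f l g (xs k) (ys k) (zs k)"
      "N f l g (xs (Suc k)) (ys (Suc k)) (zs (Suc k)) \<le> N f l g (xs k) (ys k) (zs k) - 1"
      using step[of f l g "xs k" "ys k" "zs k"] unfolding stS[of k] by simp_all
    then show ?case using Suc by linarith
  qed
  define k0 where "k0 = N f l g x (l x) (g x)"
  have Nk0: "N f l g (xs k0) (ys k0) (zs k0) = 0" using inv[of k0] k0_def by simp
  have "\<exists>u. J f l g (xs k0) (ys k0) (zs k0) u = V f l g (xs k0) (ys k0) (zs k0) \<and>
     R f l (V f l g (xs k0) (ys k0) (zs k0)) (xs k0) (ys k0) u (N f l g (xs k0) (ys k0) (zs k0))"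
    unfolding N_def by (rule LeastI_ex) (rule N_ex)
  then have "c \<le> ys k0" using Nk0 inv[of k0] unfolding R_def by auto
  moreover have "c \<le> ys k \<Longrightarrow> \<exists>t\<le>k. c \<le> l (xs t)" for k
  proof (induction k)
    case 0 then show ?case using st0 by auto
  next
    case (Suc k)
    show ?case
    proof (cases "c \<le> ys k")
      case True
      then obtain t where "t \<le> k" "c \<le> l (xs t)" using Suc.IH by blast
      then show ?thesis by (intro exI[of _ t]) auto
    next
      case False
      then have "c \<le> l (xs (Suc k))" using Suc.prems unfolding stS(2) by (simp add: le_max_iff_disj)
      then show ?thesis by blast
    qed
  qed
  ultimately obtain t where t: "c \<le> l (xs t)" by blast
  have zg: "zs k \<le> g (xs k)" for k by (cases k) (auto simp: st0 stS)
  have gc: "c \<le> g (xs k)" for k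
    using V_le_z[of f l g "xs k" "ys k" "zs k"] inv[of k] zg[of k] by simp
  define uu where "uu k = ?pol (xs k) (ys k) (zs k)" for k
  have tr: "xs k = traj f x uu k" for k by (induction k) (auto simp: st0 stS uu_def)
  have as: "aug_state f l g ?pol x = xs" unfolding aug_state_def xs_def st_def by auto
  have rp: "raa_payoff l g (traj f x u) = J f l g x (l x) (g x) u" for u
    unfolding raa_payoff_def J_def
    by (subst SUP_split[OF finl], subst INF_split[OF fing]) (simp add: min.assoc)
  have vr: "v_RAA f l g x = c" unfolding v_RAA_def c_def V_def rp ..
  have up: "min (SUP tau. l (xs tau)) (INF tau. g (xs tau)) \<le> c"
    using J_le_V[of f l g x "l x" "g x" uu] rp[of uu] unfolding c_def raa_payoff_def tr[symmetric]
      by simp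
  have lo1: "c \<le> (SUP tau. l (xs tau))"
    using fin_SUP_upper[OF finl[of l xs], of t] t by simp
  have lo2: "c \<le> (INF tau. g (xs tau))"
    by (rule cINF_greatest) (use gc in auto)
  show "v_RAA f l g x = min (SUP tau. l (aug_state f l g ?pol x tau)) (INF tau. g (aug_state f l g ?pol x tau))"
    unfolding as vr using up lo1 lo2 by simp
qed

end
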